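(* Let $p \equiv 1 \pmod 8$ and $q \equiv 3 \pmod 4$ be primes with $\left(\frac{p}{q}\right) = +1$. For a nonzero squarefree integer $b_1$ dividing $-4pq^2$, let $\mathcal{T}(b_1)$ denote the curve $$N^2 = b_1 M^4 - \frac{4pq^2}{b_1} e^4,$$ and call a rational point $(M,e,N)\in\mathbb{Q}^3$ on it nontrivial if $(M,e) \neq (0,0)$. Then: (a) if $\mathcal{T}(b_1)$ has a nontrivial rational point for some $b_1 \in \{2, -2, -2p, 2p\}$, then $\left(\frac{2}{p}\right)_4 = +1$; (b) if $\mathcal{T}(b_1)$ has a nontrivial rational point for some $b_1 \in \{q, -q, -pq, pq\}$, then $\left(\frac{q}{p}\right)_4 = +1$; (c) if $\mathcal{T}(b_1)$ has a nontrivial rational point for some $b_1 \in \{2q, -2q, -2pq, 2pq\}$, then $\left(\frac{2q}{p}\right)_4 = +1$.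
   Context: For a prime $p \equiv 1 \pmod 8$ and an integer $c$ that is a nonzero quadratic residue modulo $p$, the quartic residue symbol $\left(\frac{c}{p}\right)_4 \in \{\pm 1\}$ is defined by $\left(\frac{c}{p}\right)_4 \equiv c^{(p-1)/4} \pmod p$; it equals $+1$ iff $c$ is a fourth power modulo $p$. (Under the hypotheses, $2$, $q$ and $2q$ are quadratic residues modulo $p$.) The curves $\mathcal{T}(b_1)$ are the 2-isogeny descent torsors for the elliptic curve $y^2 = x(x^2 - 4pq^2)$; the paper states the result as a table listing, for each $b_1 \in\{2,-2,q,-q,2q,-2q\}$, the torsors $\mathcal{T}(b_1)$ and $\mathcal{T}(-pb_1)$ together with the corresponding condition. *)

theory Defs
  imports "HOL-Number_Theory.Number_Theory"
begin

text \<open>Quartic residue symbol (c/p)_4 in {1,-1}, defined by (c/p)_4 = c^((p-1)/4) mod p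
  (meaningful for p = 1 mod 8 prime and c a nonzero quadratic residue mod p).\<close>
definition quartic_symbol :: "int \<Rightarrow> int \<Rightarrow> int" where
  "quartic_symbol c p = (if [c ^ nat ((p - 1) div 4) = 1] (mod p) then 1 else -1)"

definition has_nontrivial_point :: "int \<Rightarrow> int \<Rightarrow> int \<Rightarrow> bool" where
  "has_nontrivial_point p q b1 \<longleftrightarrow>
     (\<exists>M e N :: rat. (M, e) \<noteq> (0, 0) \<and>
        N ^ 2 = of_int b1 * M ^ 4 - (of_int (4 * p * q ^ 2) / of_int b1) * e ^ 4)"

end

theory Submission
  imports Defs
begin

lemma fermat_int:
  fixes p a :: int
  assumes "prime p" "\<not> p dvd a"
  shows "[a ^ nat (p - 1) = 1] (mod p)"
proof -
  have p0: "p > 1" using assms(1) prime_gt_1_int by blast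
  define P where "P = nat p"
  have pP: "p = int P" using p0 P_def by simp
  define a' where "a' = nat (a mod p)"
  have aa: "int a' = a mod p" using a'_def p0 by simp
  have pn: "prime P" using assms(1) pP by simp
  have "\<not> P dvd a'"
  proof
    assume "P dvd a'"
    then have "int P dvd int a'" by (simp only: int_dvd_int_iff)
    then have "p dvd a mod p" using aa pP by simp
    then show False using assms(2) by (simp add: dvd_mod_iff)
  qed
  then have "[a' ^ (P - 1) = 1] (mod P)" using fermat_theorem pn by blast
  then have "[int (a' ^ (P - 1)) = int 1] (mod int P)" by (simp only: cong_int_iff)
  then have c1: "[(a mod p) ^ (P - 1) = 1] (mod p)" using aa pP by simp
  have e: "nat (p - 1) = P - 1" using pP by simp
  have "[(a mod p) ^ (P - 1) = a ^ (P - 1)] (mod p)"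
    by (intro cong_pow) (simp add: cong_def)
  then show ?thesis using c1 e cong_sym cong_trans by metis
qed

lemma rat_sq_int:
  fixes x :: rat
  assumes "x ^ 2 = of_int k"
  shows "\<exists>n. x = of_int n"
proof -
  obtain a d where q: "quotient_of x = (a, d)" by (cases "quotient_of x")
  have d0: "d > 0" using q quotient_of_denom_pos by blast
  have cop: "coprime a d" using q quotient_of_coprime by blast
  have xe: "x = of_int a / of_int d" using q quotient_of_div by blast
  have dn: "(of_int d :: rat) \<noteq> 0" using d0 by simp
  have "(of_int a / of_int d) ^ 2 = (of_int k :: rat)" using assms xe by simp
  then have "(of_int a) ^ 2 = (of_int k * (of_int d) ^ 2 :: rat)"
    using dn by (simp add: power_divide divide_eq_eq)
  then have "of_int (a ^ 2) = (of_int (k * d ^ 2) :: rat)" by simp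
  then have "a ^ 2 = k * d ^ 2" by (simp only: of_int_eq_iff)
  then have "d dvd a ^ 2" by simp
  moreover have "coprime (a ^ 2) d" using cop by simp
  ultimately have "is_unit d" using coprime_absorb_right[of d "a^2"] by blast
  then have "d = 1" using d0 by simp
  then show ?thesis using xe by auto
qed

lemma reduce_coprime:
  fixes b c :: int and M e N :: rat
  assumes ne: "(M, e) \<noteq> (0, 0)" and eq: "N^2 = of_int b * M^4 - of_int c * e^4"
  shows "\<exists>m f n :: int. coprime m f \<and> n^2 = b*m^4 - c*f^4"
proof -
  obtain a1 d1 where q1: "quotient_of M = (a1, d1)" by (cases "quotient_of M")
  obtain a2 d2 where q2: "quotient_of e = (a2, d2)" by (cases "quotient_of e")
  have d1: "d1 > 0" using q1 quotient_of_denom_pos by blast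
  have d2: "d2 > 0" using q2 quotient_of_denom_pos by blast
  have M1: "M = of_int a1 / of_int d1" using q1 quotient_of_div by blast
  have e1: "e = of_int a2 / of_int d2" using q2 quotient_of_div by blast
  define x where "x = a1 * d2"
  define y where "y = a2 * d1"
  define d where "d = d1 * d2"
  have d0: "d > 0" using d1 d2 d_def by simp
  have M2: "M = of_int x / of_int d" using M1 d1 d2 unfolding x_def d_def by (simp add: field_simps)
  have e2: "e = of_int y / of_int d" using e1 d1 d2 unfolding y_def d_def by (simp add: field_simps)
  have xy: "x \<noteq> 0 \<or> y \<noteq> 0"
  proof (rule ccontr)
    assume "\<not> (x \<noteq> 0 \<or> y \<noteq> 0)"
    then have "M = 0" "e = 0" using M2 e2 by auto
    then show False using ne by simp
  qed
  define g where "g = gcd x y"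
  have g0: "g > 0" using xy g_def by simp
  define m where "m = x div g"
  define f where "f = y div g"
  have cop: "coprime m f" using div_gcd_coprime[OF xy] m_def f_def g_def by simp
  have xm: "x = g * m" unfolding m_def g_def by simp
  have yf: "y = g * f" unfolding f_def g_def by simp
  define L where "L = (of_int g / of_int d :: rat)"
  have L0: "L \<noteq> 0" using g0 d0 L_def by simp
  have M3: "M = L * of_int m" using M2 xm L_def by simp
  have e3: "e = L * of_int f" using e2 yf L_def by simp
  have "N^2 = L^4 * (of_int b * (of_int m)^4 - of_int c * (of_int f)^4)"
    using eq M3 e3 by (simp add: power_mult_distrib algebra_simps)
  then have "(N / L^2)^2 = of_int b * (of_int m)^4 - of_int c * (of_int f)^4"
    using L0 by (simp add: power_divide field_simps power_mult_distrib flip: power_mult)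
  also have "\<dots> = of_int (b*m^4 - c*f^4)" by simp
  finally obtain n where n: "N / L^2 = of_int n" using rat_sq_int by blast
  have "(of_int n :: rat)^2 = of_int (b*m^4 - c*f^4)"
    using \<open>(N / L^2)^2 = _\<close> n by simp
  then have "of_int (n^2) = (of_int (b*m^4 - c*f^4) :: rat)" by simp
  then have "n^2 = b*m^4 - c*f^4" by (simp only: of_int_eq_iff)
  then show ?thesis using cop by blast
qed

lemma two_QR:
  fixes p :: int
  assumes pp: "prime p" and p8: "p mod 8 = 1"
  shows "QuadRes p 2"
proof -
  have p1: "p > 1" using pp prime_gt_1_int by blast
  have p9: "p \<ge> 9" using p1 p8 by presburger
  define k where "k = (p - 1) div 8"
  have pk: "p = 8 * k + 1" using p8 k_def by presburger
  have np: "int (nat p) = p" using p1 by simp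
  have "\<not> [2 = 0] (mod int (nat p))"
  proof
    assume "[2 = 0] (mod int (nat p))"
    then have "p dvd 2" using np by (simp add: cong_0_iff)
    then have "p \<le> 2" using zdvd_imp_le by fastforce
    then show False using p9 by simp
  qed
  then interpret G: GAUSS "nat p" 2
    using pp p9 by unfold_locales auto
  have h: "(int (nat p) - 1) div 2 = 4 * k" using np pk by simp
  have C: "G.C = (\<lambda>x. x * 2) ` G.A"
    unfolding G.C_def G.B_def image_image
  proof (rule image_cong[OF refl])
    fix x assume "x \<in> G.A"
    then have "0 < x" "x \<le> 4 * k" unfolding G.A_def h by auto
    then show "x * 2 mod int (nat p) = x * 2" using np pk by simp
  qed
  have E: "G.E = (\<lambda>x. x * 2) ` {2 * k <.. 4 * k}"
    unfolding G.E_def C G.A_def h by auto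
  have "card G.E = card {2 * k <.. 4 * k}"
    unfolding E by (rule card_image) (simp add: inj_on_def)
  also have "\<dots> = nat (2 * k)" by simp
  finally have cE: "card G.E = 2 * nat k" by simp
  have "Legendre 2 (int (nat p)) = 1"
    using G.gauss_lemma cE by (simp add: power_mult)
  then have "Legendre 2 p = 1" using np by simp
  then show ?thesis unfolding Legendre_def by (auto split: if_splits)
qed

lemma recip_QR:
  fixes p r :: int
  assumes pp: "prime p" and rp: "prime r" and p4: "p mod 4 = 1" and r2: "r \<noteq> 2"
    and rne: "r \<noteq> p" and L: "Legendre p r = 1"
  shows "QuadRes p r"
proof -
  have p1: "p > 1" using pp prime_gt_1_int by blast
  have r1: "r > 1" using rp prime_gt_1_int by blast
  have p2: "p > 2" using p1 p4 by presburger
  have r3: "r > 2" using r1 r2 by simp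
  have "even ((p - 1) div 2)" using p4 by presburger
  then have ev: "even ((p - 1) div 2 * ((r - 1) div 2))" by simp
  have nn: "0 \<le> (p - 1) div 2 * ((r - 1) div 2)" using p1 r1 by simp
  have "even (nat ((p - 1) div 2 * ((r - 1) div 2)))"
    using ev nn by (simp add: even_nat_iff)
  then have "(-1::int) ^ (nat ((p - 1) div 2 * ((r - 1) div 2))) = 1" by simp
  moreover have "Legendre p r * Legendre r p = (-1::int) ^ (nat ((p - 1) div 2 * ((r - 1) div 2)))"
    using Quadratic_Reciprocity_int[of p r] pp rp p2 r3 rne p1 r1 by simp
  ultimately have "Legendre r p = 1" using L by simp
  then show ?thesis unfolding Legendre_def by (auto split: if_splits)
qed

lemma Legendre_from_sq:
  fixes p r s :: int
  assumes "\<not> r dvd p" "[s^2 = p] (mod r)"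
  shows "Legendre p r = 1"
  using assms unfolding Legendre_def QuadRes_def by (auto simp: cong_0_iff)

lemma quartic_conclude:
  fixes p t u Y s :: int
  assumes pp: "prime p" and p8: "p mod 8 = 1" and c: "[u^4 = s*t*Y^4] (mod p)"
    and s: "s = 1 \<or> s = -1" and Y: "\<not> p dvd Y" and t: "\<not> p dvd t"
  shows "[t ^ nat ((p - 1) div 4) = 1] (mod p)"
proof -
  define K where "K = nat ((p - 1) div 4)"
  have p1: "p > 1" using pp prime_gt_1_int by blast
  have e4: "p - 1 = 4 * ((p - 1) div 4)" using p8 by presburger
  have K4: "nat (p - 1) = 4 * K" unfolding K_def by (subst e4) (simp add: nat_mult_distrib)
  have "even ((p - 1) div 4)" using p8 by presburger
  then have evK: "even K" using p1 K_def by (simp add: even_nat_iff)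
  have sK: "s ^ K = 1" using s evK by auto
  have pst: "\<not> p dvd s * t * Y^4"
  proof
    assume "p dvd s * t * Y^4"
    then have "p dvd s \<or> p dvd t \<or> p dvd Y^4" using pp by (simp add: prime_dvd_mult_iff)
    moreover have "\<not> p dvd s"
    proof
      assume "p dvd s"
      then have "p dvd 1" using s by auto
      then show False using p1 by simp
    qed
    moreover have "\<not> p dvd Y^4"
    proof
      assume "p dvd Y^4"
      then have "p dvd Y" using pp prime_dvd_power by blast
      then show False using Y by simp
    qed
    ultimately show False using t by blast
  qed
  have u: "\<not> p dvd u"
  proof
    assume "p dvd u"
    moreover have "u^4 = u * u^3" by (simp add: numeral_eq_Suc)
    ultimately have "p dvd u^4" by (metis dvd_mult2)
    then have "[u^4 = 0] (mod p)" by (simp add: cong_0_iff)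
    then have "[s*t*Y^4 = 0] (mod p)" using c cong_sym cong_trans by blast
    then show False using pst by (simp add: cong_0_iff)
  qed
  have "[u ^ nat (p - 1) = 1] (mod p)" using fermat_int pp u by blast
  then have u1: "[(u^4) ^ K = 1] (mod p)" using K4 by (simp add: power_mult)
  have Y1: "[(Y^4) ^ K = 1] (mod p)" using fermat_int[OF pp Y] K4 by (simp add: power_mult)
  have "[(u^4) ^ K = (s*t*Y^4) ^ K] (mod p)" using c by (rule cong_pow)
  then have "[(s*t*Y^4) ^ K = 1] (mod p)" using u1 cong_sym cong_trans by blast
  moreover have "(s*t*Y^4) ^ K = t^K * (Y^4)^K" using sK by (simp only: power_mult_distrib)
  ultimately have a1: "[t^K * (Y^4)^K = 1] (mod p)" by simp
  have "[t^K * (Y^4)^K = t^K * 1] (mod p)" using Y1 by (rule cong_scalar_left)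
  then have "[t^K * 1 = 1] (mod p)" using a1 cong_sym cong_trans by blast
  then have "[t^K = 1] (mod p)" by simp
  then show ?thesis using K_def by simp
qed

lemma basic_facts:
  fixes p q :: int
  assumes pp: "prime p" and qp: "prime q" and p8: "p mod 8 = 1" and q4: "q mod 4 = 3"
  shows "p > 4" "q > 2" "p \<noteq> q" "p \<noteq> 2" "q \<noteq> 2" "p mod 4 = 1"
proof -
  have p1: "p > 1" using pp prime_gt_1_int by blast
  have q1: "q > 1" using qp prime_gt_1_int by blast
  show "p > 4" using p1 p8 by presburger
  show "q > 2" using q1 q4 by presburger
  show "p \<noteq> q" using p8 q4 by presburger
  show "p \<noteq> 2" using p8 by presburger
  show "q \<noteq> 2" using q4 by presburger
  show "p mod 4 = 1" using p8 by presburger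
qed

lemma not_p2:
  fixes p q :: int
  assumes pp: "prime p" and qp: "prime q" and pq: "p \<noteq> q" and p4: "p > 4"
  shows "\<not> p^2 dvd 4*p*q^2"
proof
  assume "p^2 dvd 4*p*q^2"
  then have "p * p dvd p * (4*q^2)" by (simp add: power2_eq_square ac_simps)
  then have "p dvd 4*q^2" using p4 by simp
  then have "p dvd 4 \<or> p dvd q^2" using pp by (simp add: prime_dvd_mult_iff)
  moreover have "\<not> p dvd 4" using p4 zdvd_imp_le by fastforce
  moreover have "\<not> p dvd q^2"
  proof
    assume "p dvd q^2"
    then have "p dvd q" using pp prime_dvd_power by blast
    then show False using pp qp pq primes_dvd_imp_eq by blast
  qed
  ultimately show False by blast
qed

lemma prime_factor_QR:
  fixes p q b c m f n r :: int
  assumes pp: "prime p" and qp: "prime q" and p8: "p mod 8 = 1" and q4: "q mod 4 = 3"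
    and Lpq: "Legendre p q = 1" and bc: "b * c = 4 * p * q^2" and cop: "coprime m f"
    and eq: "n^2 = b*m^4 - c*f^4" and rp: "prime r" and rn: "r dvd n"
  shows "QuadRes p r"
proof -
  note bf = basic_facts[OF pp qp p8 q4]
  consider "r = p" | "r = 2" | "r = q" | "r \<noteq> p \<and> r \<noteq> 2 \<and> r \<noteq> q" by blast
  then show ?thesis
  proof cases
    case 1
    have "[0^2 = p] (mod p)" by (simp add: cong_def)
    then show ?thesis using 1 unfolding QuadRes_def by blast
  next
    case 2
    then show ?thesis using two_QR pp p8 by blast
  next
    case 3
    then show ?thesis using recip_QR[OF pp qp bf(6) bf(5)] bf(3) Lpq by metis
  next
    case 4
    have r1: "r > 1" using rp prime_gt_1_int by blast
    have rn2: "r dvd n^2" using rn by (simp add: power2_eq_square)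
    have rfalse: "\<not> r dvd b"
    proof
      assume "r dvd b"
      then have "r dvd 4 * p * q^2" using bc dvd_mult2 by metis
      then have "r dvd 4 \<or> r dvd p \<or> r dvd q^2" using rp by (simp add: prime_dvd_mult_iff)
      moreover have "r dvd 4 \<Longrightarrow> False"
      proof -
        assume "r dvd 4"
        then have "r dvd 2^2" by simp
        then have "r dvd 2" using rp prime_dvd_power by blast
        then have "r = 2" using rp primes_dvd_imp_eq[of r 2] by simp
        then show False using 4 by simp
      qed
      moreover have "r dvd p \<Longrightarrow> False" using rp pp primes_dvd_imp_eq 4 by blast
      moreover have "r dvd q^2 \<Longrightarrow> False" using rp qp primes_dvd_imp_eq 4 prime_dvd_power by blast
      ultimately show False by blast
    qed
    have rf: "\<not> r dvd f"
    proof
      assume "r dvd f"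
      then have "r dvd c * f^4" by (simp add: dvd_mult power_numeral_reduce)
      then have "r dvd n^2 + c * f^4" using rn2 by simp
      then have "r dvd b * m^4" using eq by (simp add: algebra_simps)
      then have "r dvd b \<or> r dvd m^4" using rp by (simp add: prime_dvd_mult_iff)
      then have "r dvd m" using rfalse rp prime_dvd_power by blast
      then have "is_unit r" using cop \<open>r dvd f\<close> coprime_common_divisor by blast
      then show False using r1 by simp
    qed
    have r2qf: "\<not> r dvd 2*q*f^2"
    proof
      assume "r dvd 2*q*f^2"
      then have "r dvd 2 \<or> r dvd q \<or> r dvd f^2" using rp by (simp add: prime_dvd_mult_iff)
      then show False using rp primes_dvd_imp_eq[of r 2] primes_dvd_imp_eq[OF rp qp] 4 rf prime_dvd_power by auto
    qed
    then have "coprime (2*q*f^2) r" using rp prime_imp_coprime coprime_commute by blast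
    then obtain w where w: "[(2*q*f^2) * w = 1] (mod r)" using cong_solve_coprime_int by blast
    have c1: "[b*m^4 = c*f^4] (mod r)"
      using rn2 eq by (simp add: cong_iff_dvd_diff)
    have "[b*(b*m^4) = b*(c*f^4)] (mod r)" using c1 by (rule cong_scalar_left)
    moreover have "b*(b*m^4) = (b*m^2)^2" by (simp add: power4_eq_xxxx power2_eq_square ac_simps)
    moreover have "b*(c*f^4) = p*(2*q*f^2)^2"
    proof -
      have "b*(c*f^4) = (b*c)*f^4" by (simp add: mult.assoc)
      also have "\<dots> = (4*p*q^2)*f^4" using bc by simp
      also have "\<dots> = p*(2*q*f^2)^2" by (simp add: power4_eq_xxxx power2_eq_square ac_simps)
      finally show ?thesis .
    qed
    ultimately have c2: "[(b*m^2)^2 = p*(2*q*f^2)^2] (mod r)" by simp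
    have "[(b*m^2)^2 * w^2 = p*(2*q*f^2)^2 * w^2] (mod r)" using c2 by (rule cong_scalar_right)
    moreover have "p*(2*q*f^2)^2 * w^2 = p * ((2*q*f^2) * w)^2" by (simp add: power_mult_distrib)
    moreover have "(b*m^2)^2 * w^2 = (b*m^2*w)^2" by (simp add: power_mult_distrib)
    ultimately have a1: "[(b*m^2*w)^2 = p * ((2*q*f^2) * w)^2] (mod r)" by simp
    have "[p * ((2*q*f^2) * w)^2 = p * 1^2] (mod r)"
      using w by (intro cong_scalar_left cong_pow)
    then have "[p * ((2*q*f^2) * w)^2 = p] (mod r)" by simp
    then have "[(b*m^2*w)^2 = p] (mod r)" using a1 cong_trans by blast
    moreover have "\<not> r dvd p" using rp pp primes_dvd_imp_eq 4 by blast
    ultimately have "Legendre p r = 1" using Legendre_from_sq by blast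
    then show ?thesis using recip_QR[OF pp rp bf(6)] 4 by blast
  qed
qed

lemma QR_mult:
  assumes "QuadRes p a" "QuadRes p b"
  shows "QuadRes p (a * b)"
proof -
  obtain y z where "[y^2 = a] (mod p)" "[z^2 = b] (mod p)" using assms QuadRes_def by blast
  then have "[(y*z)^2 = a * b] (mod p)" by (simp add: power_mult_distrib cong_mult)
  then show ?thesis unfolding QuadRes_def by blast
qed

lemma QR_primes:
  fixes p :: int
  assumes "\<And>r. prime r \<Longrightarrow> r dvd int n \<Longrightarrow> QuadRes p r"
  shows "QuadRes p (int n)"
  using assms
proof (induction n rule: less_induct)
  case (less n)
  show ?case
  proof (cases "n \<le> 1")
    case True
    then have "n = 0 \<or> n = 1" by auto
    then show ?thesis unfolding QuadRes_def
      by (metis cong_refl of_nat_0 of_nat_1 power_one zero_power2)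
  next
    case False
    then obtain r where r: "prime r" "r dvd n" using prime_factor_nat[of n] by auto
    then obtain m where m: "n = r * m" by blast
    have "r > 1" using r prime_gt_1_nat by blast
    have "m > 0" using m False by (cases "m = 0") auto
    then have "m < n" using m \<open>r > 1\<close> n_less_m_mult_n by simp
    have "QuadRes p (int m)"
    proof (rule less.IH[OF \<open>m < n\<close>])
      fix s :: int assume "prime s" "s dvd int m"
      then have "s dvd int n" using m by simp
      then show "QuadRes p s" using less.prems \<open>prime s\<close> by blast
    qed
    moreover have "QuadRes p (int r)" using less.prems r m by simp
    ultimately have "QuadRes p (int r * int m)" using QR_mult by blast
    then show ?thesis using m by simp
  qed
qed


lemma sq_dvd_of_dvd:
  fixes p x :: int
  assumes "p dvd x"
  shows "p^2 dvd x^2" "p^2 dvd x^4" "p dvd x^4"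
proof -
  show a: "p^2 dvd x^2" using assms by (rule dvd_power_same)
  have "x^2 dvd x^4" by (simp add: le_imp_power_dvd)
  then show b: "p^2 dvd x^4" using a dvd_trans by blast
  have "p dvd p^2" by (simp add: power2_eq_square)
  then show "p dvd x^4" using b dvd_trans by blast
qed

lemma main_case:
  fixes p q b c m f n t :: int
  assumes pp: "prime p" and qp: "prime q" and p8: "p mod 8 = 1" and q4: "q mod 4 = 3"
    and Lpq: "Legendre p q = 1" and bc: "b * c = 4 * p * q^2" and cop: "coprime m f"
    and eq: "n^2 = b*m^4 - c*f^4"
    and tt: "t = 2 \<or> t = q \<or> t = 2*q"
    and cs: "(p dvd c \<and> (b = t \<or> b = -t)) \<or>
             (p dvd b \<and> (\<exists>k. (k = 1 \<or> k = 2 \<or> k = q) \<and> (c = t*k^2 \<or> c = -(t*k^2))))"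
  shows "[t ^ nat ((p-1) div 4) = 1] (mod p)"
proof -
  note bf = basic_facts[OF pp qp p8 q4]
  have p1: "p > 1" using pp prime_gt_1_int by blast
  have np2: "\<not> p^2 dvd b*c" using not_p2[OF pp qp bf(3) bf(1)] bc by simp
  have p2: "\<not> p dvd 2"
  proof
    assume "p dvd 2"
    then have "p = 2" using pp primes_dvd_imp_eq[of p 2] by simp
    then show False using bf by simp
  qed
  have pq: "\<not> p dvd q" using pp qp primes_dvd_imp_eq bf(3) by blast
  have pt: "\<not> p dvd t" using tt p2 pq pp by (auto simp: prime_dvd_mult_iff)
  have "QuadRes p (int (nat \<bar>n\<bar>))"
  proof (rule QR_primes)
    fix r :: int assume "prime r" "r dvd int (nat \<bar>n\<bar>)"
    then have "r dvd n" by simp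
    then show "QuadRes p r" using prime_factor_QR[OF pp qp p8 q4 Lpq bc cop eq \<open>prime r\<close>] by blast
  qed
  then obtain u where u: "[u^2 = \<bar>n\<bar>] (mod p)" unfolding QuadRes_def by auto
  then have "[(u^2)^2 = \<bar>n\<bar>^2] (mod p)" by (rule cong_pow)
  then have u4: "[u^4 = n^2] (mod p)" by (simp flip: power_mult)
  have nodd: "\<not> p dvd m \<or> \<not> p dvd f"
  proof (rule ccontr)
    assume "\<not> (\<not> p dvd m \<or> \<not> p dvd f)"
    then have "p dvd m" "p dvd f" by auto
    then have "is_unit p" using cop coprime_common_divisor by blast
    then show False using p1 by simp
  qed
  have pn: "p dvd n \<Longrightarrow> p^2 dvd n^2" by (rule sq_dvd_of_dvd(1))
  from cs show ?thesis
  proof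
    assume A: "p dvd c \<and> (b = t \<or> b = -t)"
    have pm: "\<not> p dvd m"
    proof
      assume pm: "p dvd m"
      then have pf: "\<not> p dvd f" using nodd by blast
      have "p dvd m^4" using sq_dvd_of_dvd(3)[OF pm] .
      then have "p dvd b*m^4" by simp
      moreover have "p dvd c*f^4" using A by simp
      ultimately have "p dvd n^2" using eq by simp
      then have "p dvd n" using pp prime_dvd_power by blast
      then have "p^2 dvd n^2" by (rule pn)
      moreover have "p^2 dvd b*m^4" using sq_dvd_of_dvd(2)[OF pm] by simp
      ultimately have "p^2 dvd b*m^4 - n^2" by simp
      then have "p^2 dvd c*f^4" using eq by simp
      moreover have "coprime (p^2) (f^4)" using pf pp prime_imp_coprime by simp
      ultimately have "p^2 dvd c" using coprime_dvd_mult_left_iff by blast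
      then have "p^2 dvd b*c" by simp
      then show False using np2 by simp
    qed
    have "[c*f^4 = 0] (mod p)" using A by (simp add: cong_0_iff)
    then have "[b*m^4 - c*f^4 = b*m^4 - 0] (mod p)" by (intro cong_diff cong_refl)
    then have "[n^2 = b*m^4] (mod p)" using eq by simp
    then have c1: "[u^4 = b*m^4] (mod p)" using u4 cong_trans by blast
    obtain s where s: "s = 1 \<or> s = -1" "b = s*t"
    proof (cases "b = t")
      case True
      then show ?thesis using that[of 1] by simp
    next
      case False
      then show ?thesis using that[of "-1"] A by simp
    qed
    have "[u^4 = s*t*m^4] (mod p)" using c1 s by simp
    then show ?thesis using quartic_conclude[OF pp p8 _ s(1) pm pt] by blast
  next
    assume B: "p dvd b \<and> (\<exists>k. (k = 1 \<or> k = 2 \<or> k = q) \<and> (c = t*k^2 \<or> c = -(t*k^2)))"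
    then obtain k where k: "k = 1 \<or> k = 2 \<or> k = q" "c = t*k^2 \<or> c = -(t*k^2)" by blast
    have pf: "\<not> p dvd f"
    proof
      assume pf: "p dvd f"
      then have pm: "\<not> p dvd m" using nodd by blast
      have "p dvd f^4" using sq_dvd_of_dvd(3)[OF pf] .
      then have "p dvd c*f^4" by simp
      moreover have "p dvd b*m^4" using B by simp
      ultimately have "p dvd n^2" using eq by simp
      then have "p dvd n" using pp prime_dvd_power by blast
      then have "p^2 dvd n^2" by (rule pn)
      moreover have "p^2 dvd c*f^4" using sq_dvd_of_dvd(2)[OF pf] by simp
      ultimately have "p^2 dvd n^2 + c*f^4" by simp
      then have "p^2 dvd b*m^4" using eq by simp
      moreover have "coprime (p^2) (m^4)" using pm pp prime_imp_coprime by simp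
      ultimately have "p^2 dvd b" using coprime_dvd_mult_left_iff by blast
      then have "p^2 dvd b*c" by simp
      then show False using np2 by simp
    qed
    have q1: "QuadRes p 1" unfolding QuadRes_def by (rule exI[of _ 1]) simp
    have "QuadRes p k" using k(1) two_QR[OF pp p8] recip_QR[OF pp qp bf(6) bf(5) bf(3) [symmetric] Lpq] q1
      by blast
    then obtain v where v: "[v^2 = k] (mod p)" unfolding QuadRes_def by blast
    have pk: "\<not> p dvd k" using k(1) p2 pq p1 by (auto simp: zdvd_not_zless)
    have pv: "\<not> p dvd v"
    proof
      assume "p dvd v"
      then have "p dvd v^2" by (simp add: power2_eq_square)
      then have "[v^2 = 0] (mod p)" by (simp add: cong_0_iff)
      then have "[k = 0] (mod p)" using v cong_sym cong_trans by blast
      then show False using pk by (simp add: cong_0_iff)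
    qed
    have pvf: "\<not> p dvd v*f" using pv pf pp by (simp add: prime_dvd_mult_iff)
    have "[b*m^4 = 0] (mod p)" using B by (simp add: cong_0_iff)
    then have "[b*m^4 - c*f^4 = 0 - c*f^4] (mod p)" by (intro cong_diff cong_refl)
    then have "[n^2 = - c*f^4] (mod p)" using eq by simp
    then have c1: "[u^4 = - c*f^4] (mod p)" using u4 cong_trans by blast
    obtain s where s: "s = 1 \<or> s = -1" "- c = s*t*k^2"
    proof (cases "c = t*k^2")
      case True
      then show ?thesis using that[of "-1"] by simp
    next
      case False
      then show ?thesis using that[of 1] k(2) by simp
    qed
    have "[(v^2)^2 = k^2] (mod p)" using v by (rule cong_pow)
    then have X: "[s*t*f^4*(v^2)^2 = s*t*f^4*k^2] (mod p)" by (rule cong_scalar_left)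
    have e1: "s*t*f^4*(v^2)^2 = s*t*(v*f)^4"
      by (simp add: power_mult_distrib power4_eq_xxxx power2_eq_square ac_simps)
    have e2: "s*t*f^4*k^2 = - c*f^4" using s(2) by (simp add: ac_simps)
    from X have "[s*t*(v*f)^4 = - c*f^4] (mod p)" unfolding e1 e2 .
    then have "[u^4 = s*t*(v*f)^4] (mod p)" using c1 cong_sym cong_trans by blast
    then show ?thesis using quartic_conclude[OF pp p8 _ s(1) pvf pt] by blast
  qed
qed



lemma from_point:
  fixes p q b c :: int
  assumes h: "has_nontrivial_point p q b" and bc: "b * c = 4*p*q^2" and b0: "b \<noteq> 0"
  shows "\<exists>m f n. coprime m f \<and> n^2 = b*m^4 - c*f^4"
proof -
  obtain M e N :: rat where ne: "(M, e) \<noteq> (0, 0)"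
    and eq: "N ^ 2 = of_int b * M ^ 4 - (of_int (4 * p * q ^ 2) / of_int b) * e ^ 4"
    using h unfolding has_nontrivial_point_def by blast
  have "(of_int (4 * p * q ^ 2) / of_int b :: rat) = of_int (b * c) / of_int b" using bc by simp
  also have "\<dots> = of_int c" using b0 by simp
  finally have "N ^ 2 = of_int b * M ^ 4 - of_int c * e ^ 4" using eq by simp
  then show ?thesis using reduce_coprime ne by blast
qed

lemma final_case:
  fixes p q b c t :: int
  assumes pp: "prime p" and qp: "prime q" and p8: "p mod 8 = 1" and q4: "q mod 4 = 3"
    and Lpq: "Legendre p q = 1" and h: "has_nontrivial_point p q b"
    and bc: "b * c = 4 * p * q^2" and b0: "b \<noteq> 0"
    and tt: "t = 2 \<or> t = q \<or> t = 2*q"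
    and cs: "(p dvd c \<and> (b = t \<or> b = -t)) \<or>
             (p dvd b \<and> (\<exists>k. (k = 1 \<or> k = 2 \<or> k = q) \<and> (c = t*k^2 \<or> c = -(t*k^2))))"
  shows "quartic_symbol t p = 1"
proof -
  obtain m f n where "coprime m f" "n^2 = b*m^4 - c*f^4" using from_point[OF h bc b0] by blast
  then have "[t ^ nat ((p-1) div 4) = 1] (mod p)"
    using main_case[OF pp qp p8 q4 Lpq bc _ _ tt cs] by blast
  then show ?thesis unfolding quartic_symbol_def by simp
qed

theorem proposition4:
  fixes p q :: int
  assumes "prime p" and "prime q"
    and "p mod 8 = 1" and "q mod 4 = 3"
    and "Legendre p q = 1"
  shows "((\<exists>b1 \<in> {2, -2, -2 * p, 2 * p}. has_nontrivial_point p q b1) \<longrightarrow> quartic_symbol 2 p = 1)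
       \<and> ((\<exists>b1 \<in> {q, -q, -p * q, p * q}. has_nontrivial_point p q b1) \<longrightarrow> quartic_symbol q p = 1)
       \<and> ((\<exists>b1 \<in> {2 * q, -2 * q, -2 * p * q, 2 * p * q}. has_nontrivial_point p q b1) \<longrightarrow> quartic_symbol (2 * q) p = 1)"
proof -
  note F = final_case[OF assms]
  have p0: "p \<noteq> 0" "q \<noteq> 0" using assms(1,2) by auto
  have k1: "\<exists>k. (k = 1 \<or> k = 2 \<or> k = q) \<and> (c = t*k^2 \<or> c = -(t*k^2))"
    if "c = t * 1^2 \<or> c = -(t*1^2)" for c t using that by blast
  have k2: "\<exists>k. (k = 1 \<or> k = 2 \<or> k = q) \<and> (c = t*k^2 \<or> c = -(t*k^2))"
    if "c = t * 2^2 \<or> c = -(t*2^2)" for c t using that by blast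
  have kq: "\<exists>k. (k = 1 \<or> k = 2 \<or> k = q) \<and> (c = t*k^2 \<or> c = -(t*k^2))"
    if "c = t * q^2 \<or> c = -(t*q^2)" for c t using that by blast
  have A: "quartic_symbol 2 p = 1" if "b1 \<in> {2, -2, -2 * p, 2 * p}" "has_nontrivial_point p q b1" for b1
  proof -
    from that(1) consider "b1 = 2" | "b1 = -2" | "b1 = -2*p" | "b1 = 2*p" by blast
    then show ?thesis
    proof cases
      case 1 then show ?thesis using F[of b1 "2*p*q^2" 2] that(2) by simp
    next
      case 2 then show ?thesis using F[of b1 "-2*p*q^2" 2] that(2) by simp
    next
      case 3 then show ?thesis using F[of b1 "-2*q^2" 2] that(2) p0 kq[of "-2*q^2" 2] by simp
    next
      case 4 then show ?thesis using F[of b1 "2*q^2" 2] that(2) p0 kq[of "2*q^2" 2] by simp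
    qed
  qed
  have B: "quartic_symbol q p = 1" if "b1 \<in> {q, -q, -p * q, p * q}" "has_nontrivial_point p q b1" for b1
  proof -
    from that(1) consider "b1 = q" | "b1 = -q" | "b1 = -p*q" | "b1 = p*q" by blast
    then show ?thesis
    proof cases
      case 1 then show ?thesis using F[of b1 "4*p*q" q] that(2) p0 by (simp add: power2_eq_square ac_simps)
    next
      case 2 then show ?thesis using F[of b1 "-4*p*q" q] that(2) p0 by (simp add: power2_eq_square ac_simps)
    next
      case 3 then show ?thesis using F[of b1 "-4*q" q] that(2) p0 k2[of "-4*q" q] by (simp add: power2_eq_square ac_simps)
    next
      case 4 then show ?thesis using F[of b1 "4*q" q] that(2) p0 k2[of "4*q" q] by (simp add: power2_eq_square ac_simps)
    qed
  qed
  have C: "quartic_symbol (2*q) p = 1" if "b1 \<in> {2 * q, -2 * q, -2 * p * q, 2 * p * q}" "has_nontrivial_point p q b1" for b1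
  proof -
    from that(1) consider "b1 = 2*q" | "b1 = -2*q" | "b1 = -2*p*q" | "b1 = 2*p*q" by blast
    then show ?thesis
    proof cases
      case 1 then show ?thesis using F[of b1 "2*p*q" "2*q"] that(2) p0 by (simp add: power2_eq_square ac_simps)
    next
      case 2 then show ?thesis using F[of b1 "-2*p*q" "2*q"] that(2) p0 by (simp add: power2_eq_square ac_simps)
    next
      case 3 then show ?thesis using F[of b1 "-2*q" "2*q"] that(2) p0 k1[of "-2*q" "2*q"] by (simp add: power2_eq_square ac_simps)
    next
      case 4 then show ?thesis using F[of b1 "2*q" "2*q"] that(2) p0 k1[of "2*q" "2*q"] by (simp add: power2_eq_square ac_simps)
    qed
  qed
  show ?thesis using A B C by blast
qed


end
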